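(* There is a positive absolute constant $C_0$ such that whenever $n\geq 2$, $D$ is a domain in $\mathbb{R}^n$ such that $\mathbb{R}^n\setminus D$ contains at least two points, and $z\in D$, we have $$\lambda''_D(z)\leq\lambda'_D(z)\leq\lambda_D(z)\leq C_0\,\lambda''_D(z)$$ and $$\lambda_D(z)\leq\frac{1}{d(z,\partial D)}.$$
   Context: Write $d(z,\partial D)=\inf\{|z-a|:a\in\partial D\}$ and $Q(z;a,b)=|z-a|\big(1+\big|\log\frac{|a-b|}{|z-a|}\big|\big)$ (equal to $+\infty$ when $a=b$). For $z\in D$ define $1/\lambda_D(z)=\inf\{Q(z;a,b): a,b\in\mathbb{R}^n\setminus D\}$, $1/\lambda'_D(z)=\inf\{Q(z;a,b): a,b\in\partial D\}$, $1/\lambda''_D(z)=\inf\{Q(z;a,b): a,b\in\partial D,\ |z-a|=d(z,\partial D)\}$. *)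

theory Defs
  imports "HOL-Analysis.Analysis"
begin

text \<open>Euclidean n-space R^n, realised as the real sequences vanishing from index n on,
  with the Euclidean distance. This allows the dimension n to be quantified inside
  the statement (after the absolute constant).\<close>

definition Rn :: "nat \<Rightarrow> (nat \<Rightarrow> real) set" where
  "Rn n = {x. \<forall>i\<ge>n. x i = 0}"

definition distn :: "nat \<Rightarrow> (nat \<Rightarrow> real) \<Rightarrow> (nat \<Rightarrow> real) \<Rightarrow> real" where
  "distn n x y = sqrt (\<Sum>i<n. (x i - y i)\<^sup>2)"

definition topn :: "nat \<Rightarrow> (nat \<Rightarrow> real) topology" where
  "topn n = Metric_space.mtopology (Rn n) (distn n)"

definition domain_n :: "nat \<Rightarrow> (nat \<Rightarrow> real) set \<Rightarrow> bool" where
  "domain_n n D \<longleftrightarrow> D \<noteq> {} \<and> openin (topn n) D \<and> connectedin (topn n) D"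

definition bdry :: "nat \<Rightarrow> (nat \<Rightarrow> real) set \<Rightarrow> (nat \<Rightarrow> real) set" where
  "bdry n D = (topn n) frontier_of D"

definition dbd :: "nat \<Rightarrow> (nat \<Rightarrow> real) set \<Rightarrow> (nat \<Rightarrow> real) \<Rightarrow> real" where
  "dbd n D z = Inf {distn n z a | a. a \<in> bdry n D}"

definition Qn :: "nat \<Rightarrow> (nat \<Rightarrow> real) \<Rightarrow> (nat \<Rightarrow> real) \<Rightarrow> (nat \<Rightarrow> real) \<Rightarrow> ereal" where
  "Qn n z a b = (if a = b then \<infinity>
      else ereal (distn n z a * (1 + \<bar>ln (distn n a b / distn n z a)\<bar>)))"

definition lam :: "nat \<Rightarrow> (nat \<Rightarrow> real) set \<Rightarrow> (nat \<Rightarrow> real) \<Rightarrow> ereal" where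
  "lam n D z = inverse (Inf {Qn n z a b | a b. a \<in> Rn n - D \<and> b \<in> Rn n - D})"

definition lam' :: "nat \<Rightarrow> (nat \<Rightarrow> real) set \<Rightarrow> (nat \<Rightarrow> real) \<Rightarrow> ereal" where
  "lam' n D z = inverse (Inf {Qn n z a b | a b. a \<in> bdry n D \<and> b \<in> bdry n D})"

definition lam'' :: "nat \<Rightarrow> (nat \<Rightarrow> real) set \<Rightarrow> (nat \<Rightarrow> real) \<Rightarrow> ereal" where
  "lam'' n D z = inverse (Inf {Qn n z a b | a b. a \<in> bdry n D \<and> b \<in> bdry n D
                                  \<and> distn n z a = dbd n D z})"

end

theory Submission
  imports Defs
begin

lemma distn_L2: "distn n x y = L2_set (\<lambda>i. x i - y i) {..<n}"
  by (simp add: distn_def L2_set_def)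

lemma distn_nonneg: "0 \<le> distn n x y"
  by (simp add: distn_def sum_nonneg)

lemma distn_commute: "distn n x y = distn n y x"
  unfolding distn_def by (simp add: power2_commute)

lemma distn_triangle: "distn n x z \<le> distn n x y + distn n y z"
proof -
  have "distn n x z = L2_set (\<lambda>i. (x i - y i) + (y i - z i)) {..<n}"
    by (simp add: distn_L2)
  also have "\<dots> \<le> distn n x y + distn n y z"
    unfolding distn_L2 by (rule L2_set_triangle_ineq)
  finally show ?thesis .
qed

lemma distn_zero: "x \<in> Rn n \<Longrightarrow> y \<in> Rn n \<Longrightarrow> distn n x y = 0 \<longleftrightarrow> x = y"
proof
  assume x: "x \<in> Rn n" and y: "y \<in> Rn n" and "distn n x y = 0"
  then have "\<forall>i\<in>{..<n}. x i - y i = 0" by (simp add: distn_L2 L2_set_eq_0_iff)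
  moreover have "\<forall>i\<ge>n. x i = y i" using x y by (simp add: Rn_def)
  ultimately show "x = y"
  proof (intro ext)
    fix i
    assume A: "\<forall>i\<in>{..<n}. x i - y i = 0" and B: "\<forall>i\<ge>n. x i = y i"
    show "x i = y i"
    proof (cases "i < n")
      case True then show ?thesis using A by simp
    next
      case False then show ?thesis using B by simp
    qed
  qed
qed (simp add: distn_def)

lemma ms: "Metric_space (Rn n) (distn n)"
  by (unfold_locales) (auto simp: distn_nonneg distn_commute distn_zero intro: distn_triangle)

lemma topspace_topn[simp]: "topspace (topn n) = Rn n"
  unfolding topn_def by (simp add: Metric_space.topspace_mtopology[OF ms])

lemma openin_topn: "openin (topn n) U \<longleftrightarrow> U \<subseteq> Rn n \<and> (\<forall>x\<in>U. \<exists>r>0. \<forall>y\<in>Rn n. distn n x y < r \<longrightarrow> y \<in> U)"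
proof -
  interpret M: Metric_space "Rn n" "distn n" by (rule ms)
  show ?thesis
    unfolding topn_def M.openin_mtopology subset_iff M.in_mball by blast
qed

lemma closure_topn: "(topn n) closure_of S = {x \<in> Rn n. \<forall>r>0. \<exists>y\<in>S. y \<in> Rn n \<and> distn n x y < r}"
  unfolding topn_def Metric_space.metric_closure_of[OF ms] Metric_space.in_mball[OF ms]
  by auto

lemma bdry_open: "openin (topn n) D \<Longrightarrow> bdry n D = (topn n) closure_of D - D"
  unfolding bdry_def by (rule frontier_of_openin)

lemma bdry_closed: "closedin (topn n) (bdry n D)"
  unfolding bdry_def by (rule closedin_frontier_of)

lemma bdry_sub: "bdry n D \<subseteq> Rn n"
  unfolding bdry_def using frontier_of_subset_topspace topspace_topn by metis

lemma exit_point: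
  fixes \<gamma> :: "real \<Rightarrow> nat \<Rightarrow> real"
  assumes op: "openin (topn n) D"
    and g: "\<forall>t\<in>{0..1}. \<gamma> t \<in> Rn n"
    and cont: "\<forall>i<n. continuous_on {0..1} (\<lambda>t. \<gamma> t i)"
    and g0: "\<gamma> 0 \<in> D" and g1: "\<gamma> 1 \<notin> D"
  shows "\<exists>t\<in>{0..1}. \<gamma> t \<in> bdry n D"
proof -
  interpret M: Metric_space "Rn n" "distn n" by (rule ms)
  have cm: "continuous_map (top_of_set {0..1}) (topn n) \<gamma>"
    unfolding topn_def M.continuous_map_to_metric
  proof (intro ballI allI impI)
    fix x :: real and e :: real
    assume x: "x \<in> topspace (top_of_set {0..1})" and e: "e > 0"
    then have x01: "x \<in> {0..1}" by simp
    have "continuous_on {0..1} (\<lambda>s. distn n (\<gamma> s) (\<gamma> x))"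
      unfolding distn_def using cont by (intro continuous_intros) auto
    then obtain d where d: "d > 0" "\<forall>s\<in>{0..1}. dist s x < d \<longrightarrow> dist (distn n (\<gamma> s) (\<gamma> x)) (distn n (\<gamma> x) (\<gamma> x)) < e"
      using \<open>continuous_on {0..1} (\<lambda>s. distn n (\<gamma> s) (\<gamma> x))\<close>[unfolded continuous_on_iff, rule_format, OF x01 e]
      by blast
    show "\<exists>U. openin (top_of_set {0..1}) U \<and> x \<in> U \<and> (\<forall>y\<in>U. \<gamma> y \<in> M.mball (\<gamma> x) e)"
    proof (intro exI conjI)
      show "openin (top_of_set {0..1}) ({0..1} \<inter> ball x d)"
        by (simp add: openin_open_Int)
      show "x \<in> {0..1} \<inter> ball x d" using x01 d by simp
      show "\<forall>y\<in>{0..1} \<inter> ball x d. \<gamma> y \<in> M.mball (\<gamma> x) e"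
      proof
        fix y assume y: "y \<in> {0..1} \<inter> ball x d"
        have "distn n (\<gamma> x) (\<gamma> x) = 0" by (simp add: distn_def)
        have yy: "y \<in> {0..1}" "dist y x < d" using y by (auto simp: dist_commute)
        have "dist (distn n (\<gamma> y) (\<gamma> x)) (distn n (\<gamma> x) (\<gamma> x)) < e"
          using d(2) yy by blast
        then have "distn n (\<gamma> y) (\<gamma> x) < e" using \<open>distn n (\<gamma> x) (\<gamma> x) = 0\<close>
          by (simp add: dist_real_def distn_nonneg)
        then show "\<gamma> y \<in> M.mball (\<gamma> x) e" using g y x01
          by (simp add: distn_commute)
      qed
    qed
  qed
  have "connectedin (top_of_set {0..1}) {0..1::real}"
    by (simp add: connectedin_subtopology connectedin_iff_connected)
  then have K: "connectedin (topn n) (\<gamma> ` {0..1})"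
    using cm connectedin_continuous_map_image by blast
  have "\<gamma> ` {0..1} \<inter> D \<noteq> {}" using g0 by force
  moreover have "\<gamma> 1 \<in> \<gamma> ` {0..1}" by simp
  then have "\<gamma> ` {0..1} - D \<noteq> {}" using g1 by blast
  ultimately have "\<gamma> ` {0..1} \<inter> bdry n D \<noteq> {}"
    unfolding bdry_def using K connectedin_Int_frontier_of by blast
  then show ?thesis by blast
qed


lemma subseq_coord:
  fixes f :: "nat \<Rightarrow> nat \<Rightarrow> real"
  assumes B: "\<forall>k i. \<bar>f k i\<bar> \<le> B i"
  shows "\<exists>r. strict_mono r \<and> (\<forall>i<m. convergent (\<lambda>k. f (r k) i))"
proof (induction m)
  case 0
  show ?case by (rule exI[of _ id]) (simp add: strict_mono_def)
next
  case (Suc m)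
  then obtain r where r: "strict_mono r" "\<forall>i<m. convergent (\<lambda>k. f (r k) i)" by blast
  have "bounded (range (\<lambda>k. f (r k) m))"
    unfolding bounded_iff using B by (auto intro!: exI[of _ "B m"])
  then obtain l r' where r': "strict_mono (r'::nat\<Rightarrow>nat)" "((\<lambda>k. f (r k) m) \<circ> r') \<longlonglongrightarrow> l"
    using bounded_imp_convergent_subsequence by blast
  show ?case
  proof (intro exI conjI allI impI)
    show "strict_mono (r \<circ> r')" using r(1) r'(1) strict_mono_o by blast
    fix i assume "i < Suc m"
    then consider "i < m" | "i = m" by linarith
    then show "convergent (\<lambda>k. f ((r \<circ> r') k) i)"
    proof cases
      case 1
      then have "convergent ((\<lambda>k. f (r k) i) \<circ> r')"
        using r(2) r'(1) convergent_subseq_convergent by blast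
      then show ?thesis by (simp add: comp_def)
    next
      case 2
      then show ?thesis using r'(2) by (auto simp: convergent_def comp_def)
    qed
  qed
qed

lemma coord_le_distn: "i < n \<Longrightarrow> \<bar>x i - y i\<bar> \<le> distn n x y"
proof -
  assume i: "i < n"
  have "\<bar>x i - y i\<bar> = sqrt ((x i - y i)^2)" by simp
  also have "\<dots> \<le> distn n x y" unfolding distn_def
    using i by (intro real_sqrt_le_mono member_le_sum) auto
  finally show ?thesis .
qed

lemma distn_line:
  "distn n (\<lambda>i. a i + s * u i) (\<lambda>i. a i + t * u i) = \<bar>s - t\<bar> * sqrt (\<Sum>i<n. (u i)^2)"
proof -
  have "distn n (\<lambda>i. a i + s * u i) (\<lambda>i. a i + t * u i) = sqrt ((s - t)^2 * (\<Sum>i<n. (u i)^2))"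
    unfolding distn_def sum_distrib_left
    by (rule arg_cong[where f=sqrt], rule sum.cong) (auto simp: power2_eq_square algebra_simps)
  then show ?thesis by (simp add: real_sqrt_mult)
qed

lemma distn_line0:
  "distn n a (\<lambda>i. a i + t * u i) = \<bar>t\<bar> * sqrt (\<Sum>i<n. (u i)^2)"
  using distn_line[of n a 0 u t] by simp

lemma seg_exit:
  assumes op: "openin (topn n) D" and x: "x \<in> D" and y: "y \<in> Rn n" "y \<notin> D"
  shows "\<exists>b\<in>bdry n D. distn n x b \<le> distn n x y"
proof -
  have xR: "x \<in> Rn n" using op x openin_topn by blast
  let ?g = "\<lambda>t::real. (\<lambda>i. x i + t * (y i - x i))"
  have "\<exists>t\<in>{0..1}. ?g t \<in> bdry n D"
  proof (rule exit_point[OF op])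
    show "\<forall>t\<in>{0..1}. ?g t \<in> Rn n" using xR y by (simp add: Rn_def)
    show "\<forall>i<n. continuous_on {0..1} (\<lambda>t. ?g t i)" by (intro allI impI continuous_intros)
    show "?g 0 \<in> D" using x by simp
    show "?g 1 \<notin> D" using y by simp
  qed
  then obtain t where t: "t \<in> {0..1}" "?g t \<in> bdry n D" by blast
  have "distn n x (?g t) = \<bar>t\<bar> * sqrt (\<Sum>i<n. (y i - x i)^2)" by (rule distn_line0)
  also have "\<dots> \<le> sqrt (\<Sum>i<n. (y i - x i)^2)" using t by (intro mult_left_le_one_le) (auto intro: sum_nonneg)
  also have "\<dots> = distn n x y" by (simp add: distn_def power2_commute)
  finally show ?thesis using t by blast
qed

lemma nearest:
  assumes op: "openin (topn n) D" and z: "z \<in> D" and p: "p \<in> Rn n" "p \<notin> D"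
  shows "dbd n D z > 0 \<and> (\<forall>c\<in>Rn n - D. dbd n D z \<le> distn n z c) \<and>
         (\<exists>a0\<in>bdry n D. distn n z a0 = dbd n D z)"
proof -
  define S where "S = {distn n z a | a. a \<in> bdry n D}"
  have dS: "dbd n D z = Inf S" by (simp add: dbd_def S_def)
  have bbS: "bdd_below S" unfolding S_def by (rule bdd_belowI[of _ 0]) (auto simp: distn_nonneg)
  obtain b0 where b0: "b0 \<in> bdry n D" using seg_exit[OF op z p] by blast
  then have Sne: "S \<noteq> {}" by (auto simp: S_def)
  have zR: "z \<in> Rn n" using op z openin_topn by blast
  have bD: "\<And>b. b \<in> bdry n D \<Longrightarrow> b \<notin> D \<and> b \<in> Rn n"
    using bdry_open[OF op] bdry_sub by blast
  obtain r where r: "r > 0" "\<forall>y\<in>Rn n. distn n z y < r \<longrightarrow> y \<in> D"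
    using op z openin_topn by meson
  have pos: "dbd n D z \<ge> r" unfolding dS
  proof (rule cInf_greatest[OF Sne])
    fix x assume "x \<in> S"
    then obtain a where "a \<in> bdry n D" "x = distn n z a" by (auto simp: S_def)
    then show "r \<le> x" using r bD by force
  qed
  have low: "\<forall>c\<in>Rn n - D. dbd n D z \<le> distn n z c"
  proof
    fix c assume "c \<in> Rn n - D"
    then obtain b where "b \<in> bdry n D" "distn n z b \<le> distn n z c" using seg_exit[OF op z] by blast
    moreover have "Inf S \<le> distn n z b" using bbS \<open>b \<in> bdry n D\<close> by (auto simp: S_def intro!: cInf_lower)
    ultimately show "dbd n D z \<le> distn n z c" using dS by linarith
  qed
  have "\<forall>k::nat. \<exists>a\<in>bdry n D. distn n z a < dbd n D z + 1 / (real k + 1)"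
  proof
    fix k :: nat
    have "Inf S < dbd n D z + 1 / (real k + 1)" using dS by (simp add: add_pos_pos)
    then obtain x where "x \<in> S" "x < dbd n D z + 1 / (real k + 1)" using cInf_lessD[OF Sne] by blast
    then show "\<exists>a\<in>bdry n D. distn n z a < dbd n D z + 1 / (real k + 1)" by (auto simp: S_def)
  qed
  then obtain f where f: "\<And>k. f k \<in> bdry n D" "\<And>k. distn n z (f k) < dbd n D z + 1 / (real k + 1)"
    by metis
  define B where "B = (\<lambda>i. \<bar>z i\<bar> + dbd n D z + 1)"
  have fB: "\<forall>k i. \<bar>f k i\<bar> \<le> B i"
  proof (intro allI)
    fix k i
    show "\<bar>f k i\<bar> \<le> B i"
    proof (cases "i < n")
      case True
      have "\<bar>z i - f k i\<bar> \<le> distn n z (f k)" by (rule coord_le_distn[OF True])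
      moreover have "1 / (real k + 1) \<le> 1" by simp
      ultimately show ?thesis using f(2)[of k] unfolding B_def by (smt (verit))
    next
      case False
      then have "f k i = 0" using bD[OF f(1)] by (simp add: Rn_def)
      then show ?thesis using pos r by (simp add: B_def)
    qed
  qed
  obtain \<sigma> where \<sigma>: "strict_mono \<sigma>" "\<forall>i<n. convergent (\<lambda>k. f (\<sigma> k) i)"
    using subseq_coord[OF fB] by blast
  define a where "a = (\<lambda>i. if i < n then lim (\<lambda>k. f (\<sigma> k) i) else 0)"
  have aR: "a \<in> Rn n" by (simp add: a_def Rn_def)
  have conv: "\<And>i. i < n \<Longrightarrow> (\<lambda>k. f (\<sigma> k) i) \<longlonglongrightarrow> a i"
    using \<sigma>(2) by (simp add: a_def convergent_LIMSEQ_iff)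
  have "(\<lambda>k. distn n (f (\<sigma> k)) a) \<longlonglongrightarrow> sqrt (\<Sum>i<n. (a i - a i)^2)"
    unfolding distn_def by (intro tendsto_intros conv) auto
  then have lim0: "(\<lambda>k. distn n (f (\<sigma> k)) a) \<longlonglongrightarrow> 0" by simp
  have close: "\<And>e. e > 0 \<Longrightarrow> \<exists>N. \<forall>k\<ge>N. distn n (f (\<sigma> k)) a < e"
  proof -
    fix e :: real assume "e > 0"
    then have "eventually (\<lambda>k. dist (distn n (f (\<sigma> k)) a) 0 < e) sequentially"
      using lim0 tendstoD by blast
    then show "\<exists>N. \<forall>k\<ge>N. distn n (f (\<sigma> k)) a < e"
      by (auto simp: eventually_sequentially distn_nonneg)
  qed
  have "a \<in> (topn n) closure_of (bdry n D)"
    unfolding closure_topn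
  proof (intro CollectI conjI allI impI aR)
    fix e :: real assume "e > 0"
    then obtain N where "\<forall>k\<ge>N. distn n (f (\<sigma> k)) a < e" using close by blast
    then have "distn n a (f (\<sigma> N)) < e" by (simp add: distn_commute)
    then show "\<exists>y\<in>bdry n D. y \<in> Rn n \<and> distn n a y < e"
      using f(1) bD by blast
  qed
  then have aB: "a \<in> bdry n D" using closure_of_closedin[OF bdry_closed] by blast
  have le: "distn n z a \<le> dbd n D z"
  proof (rule field_le_epsilon)
    fix e :: real assume e: "e > 0"
    then obtain N where N: "\<forall>k\<ge>N. distn n (f (\<sigma> k)) a < e/2" using close[of "e/2"] by auto
    have e2: "0 < e/2" using e by simp
    obtain K :: nat where K0: "inverse (real (Suc K)) < e/2"
      using reals_Archimedean[OF e2] by blast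
    then have K: "inverse (real K + 1) < e/2" by (simp add: add.commute)
    define k where "k = max N K"
    have "K \<le> \<sigma> k" using seq_suble[OF \<sigma>(1), of k] by (simp add: k_def)
    then have "1 / (real (\<sigma> k) + 1) \<le> 1 / (real K + 1)"
      by (intro divide_left_mono) auto
    then have "distn n z (f (\<sigma> k)) < dbd n D z + e/2" using f(2)[of "\<sigma> k"] K
      by (simp add: inverse_eq_divide)
    moreover have "distn n (f (\<sigma> k)) a < e/2" using N by (simp add: k_def)
    ultimately show "distn n z a \<le> dbd n D z + e" using distn_triangle[of n z a "f (\<sigma> k)"] by linarith
  qed
  have "Inf S \<le> distn n z a" using bbS aB by (auto simp: S_def intro!: cInf_lower)
  then have "distn n z a = dbd n D z" using le dS by linarith
  then show ?thesis using pos r(1) low aB by auto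
qed

lemma nz_comb:
  fixes u v :: "nat \<Rightarrow> real"
  assumes u: "(\<Sum>i<n. (u i)^2) = 1" and v: "(\<Sum>i<n. (v i)^2) = 1"
    and t: "0 \<le> t" "t \<le> (1::real)"
    and z: "(\<Sum>i<n. ((1-t) * v i + t * u i)^2) = 0"
  shows "\<forall>i<n. u i = - v i"
proof -
  have "\<forall>i\<in>{..<n}. ((1-t) * v i + t * u i)^2 = 0"
    using z by (subst (asm) sum_nonneg_eq_0_iff) auto
  then have z0: "\<forall>i<n. (1-t) * v i + t * u i = 0" by simp
  then have "\<forall>i<n. ((1-t) * v i)^2 = (t * u i)^2"
    by (metis add_eq_0_iff power2_minus)
  then have "(\<Sum>i<n. ((1-t) * v i)^2) = (\<Sum>i<n. (t * u i)^2)" by simp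
  then have "(1-t)^2 * (\<Sum>i<n. (v i)^2) = t^2 * (\<Sum>i<n. (u i)^2)"
    by (simp add: power_mult_distrib sum_distrib_left)
  then have "(1-t)^2 = t^2" using u v by simp
  then have th: "t = 1/2" by (simp add: power2_eq_square algebra_simps)
  show ?thesis using z0 th by auto
qed

lemma sum_01:
  fixes f :: "nat \<Rightarrow> real"
  assumes "2 \<le> n" "\<forall>i. 2 \<le> i \<longrightarrow> f i = (0::real)"
  shows "(\<Sum>i<n. f i) = f 0 + f 1"
proof -
  have "(\<Sum>i<n. f i) = (\<Sum>i\<in>{0,1}. f i)"
    by (rule sum.mono_neutral_right) (use assms in auto)
  then show ?thesis by simp
qed

lemma perp:
  fixes e :: "nat \<Rightarrow> real"
  assumes n: "2 \<le> n" and e: "(\<Sum>i<n. (e i)^2) = 1"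
  shows "\<exists>w\<in>Rn n. (\<Sum>i<n. (w i)^2) = 1 \<and> (\<Sum>i<n. e i * w i) = 0"
proof (cases "(e 0)^2 + (e 1)^2 > 0")
  case True
  define L where "L = sqrt ((e 0)^2 + (e 1)^2)"
  have L: "L > 0" "L^2 = (e 0)^2 + (e 1)^2" using True by (auto simp: L_def)
  define w where "w = (\<lambda>i::nat. if i = 0 then - e 1 / L else if i = 1 then e 0 / L else 0)"
  have wR: "w \<in> Rn n" using n by (auto simp: w_def Rn_def)
  have "(\<Sum>i<n. (w i)^2) = (w 0)^2 + (w 1)^2" by (rule sum_01) (use n in \<open>auto simp: w_def\<close>)
  also have "\<dots> = ((e 0)^2 + (e 1)^2) / L^2" by (simp add: w_def power_divide add_divide_distrib)
  also have "\<dots> = L^2 / L^2" using L(2) by simp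
  also have "\<dots> = 1" using L(1) by simp
  finally have 1: "(\<Sum>i<n. (w i)^2) = 1" .
  have "(\<Sum>i<n. e i * w i) = e 0 * w 0 + e 1 * w 1" by (rule sum_01) (use n in \<open>auto simp: w_def\<close>)
  also have "\<dots> = 0" by (simp add: w_def)
  finally show ?thesis using wR 1 by blast
next
  case False
  then have "(e 0)^2 = 0" "(e 1)^2 = 0"
    using zero_le_power2[of "e 0"] zero_le_power2[of "e 1"] by linarith+
  then have e0: "e 0 = 0" "e 1 = 0" by simp_all
  define w where "w = (\<lambda>i::nat. if i = 0 then 1 else (0::real))"
  have wR: "w \<in> Rn n" using n by (auto simp: w_def Rn_def)
  have "(\<Sum>i<n. (w i)^2) = (w 0)^2 + (w 1)^2" by (rule sum_01) (use n in \<open>auto simp: w_def\<close>)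
  then have 1: "(\<Sum>i<n. (w i)^2) = 1" by (simp add: w_def)
  have "(\<Sum>i<n. e i * w i) = e 0 * w 0 + e 1 * w 1" by (rule sum_01) (use n in \<open>auto simp: w_def\<close>)
  then have "(\<Sum>i<n. e i * w i) = 0" using e0 by (simp add: w_def)
  then show ?thesis using wR 1 by blast
qed

lemma arc:
  assumes op: "openin (topn n) D" and a0: "a0 \<in> Rn n" and uR: "u \<in> Rn n" and vR: "v \<in> Rn n"
    and u: "(\<Sum>i<n. (u i)^2) = 1" and v: "(\<Sum>i<n. (v i)^2) = 1"
    and nanti: "\<not> (\<forall>i<n. u i = - v i)" and d: "d > 0"
    and start: "(\<lambda>i. a0 i + d * v i) \<in> D"
  shows "(\<exists>b\<in>bdry n D. distn n a0 b = d) \<or> (\<lambda>i. a0 i + d * u i) \<in> D"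
proof (cases "(\<lambda>i. a0 i + d * u i) \<in> D")
  case True then show ?thesis by blast
next
  case False
  define w where "w = (\<lambda>t::real. \<lambda>i. (1-t) * v i + t * u i)"
  define N where "N = (\<lambda>t. sqrt (\<Sum>i<n. (w t i)^2))"
  define \<gamma> where "\<gamma> = (\<lambda>t. \<lambda>i. a0 i + (d / N t) * w t i)"
  have Npos: "\<forall>t\<in>{0..1}. N t \<noteq> 0"
  proof
    fix t :: real assume t: "t \<in> {0..1}"
    show "N t \<noteq> 0"
    proof
      assume "N t = 0"
      then have z: "(\<Sum>i<n. ((1-t) * v i + t * u i)^2) = 0" by (simp add: N_def w_def)
      have "0 \<le> t" "t \<le> 1" using t by auto
      then show False using nz_comb[OF u v _ _ z] nanti by blast
    qed
  qed
  have N0: "N 0 = 1" using v by (simp add: N_def w_def)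
  have N1: "N 1 = 1" using u by (simp add: N_def w_def)
  have "\<exists>t\<in>{0..1}. \<gamma> t \<in> bdry n D"
  proof (rule exit_point[OF op])
    show "\<forall>t\<in>{0..1}. \<gamma> t \<in> Rn n" using a0 uR vR by (simp add: Rn_def \<gamma>_def w_def)
    show "\<forall>i<n. continuous_on {0..1} (\<lambda>t. \<gamma> t i)"
      unfolding \<gamma>_def N_def w_def using Npos unfolding N_def w_def
      by (intro allI impI continuous_intros) auto
    show "\<gamma> 0 \<in> D" using start N0 by (simp add: \<gamma>_def w_def)
    show "\<gamma> 1 \<notin> D" using False N1 by (simp add: \<gamma>_def w_def)
  qed
  then obtain t where t: "t \<in> {0..1}" "\<gamma> t \<in> bdry n D" by blast
  have "distn n a0 (\<gamma> t) = \<bar>d / N t\<bar> * N t"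
    unfolding \<gamma>_def N_def by (rule distn_line0)
  also have "\<dots> = d"
  proof -
    have "N t \<ge> 0" unfolding N_def by (simp add: sum_nonneg)
    moreover have "N t \<noteq> 0" using Npos t by blast
    ultimately have "N t > 0" by simp
    then show ?thesis using d by simp
  qed
  finally show ?thesis using t by blast
qed
lemma ln_le_minus_one: "x > 0 \<Longrightarrow> ln x \<le> x - (1::real)"
  using ln_le_minus_one by simp

lemma key_ineq:
  fixes d r s \<rho> t :: real
  assumes d: "d > 0" and dr: "d \<le> r" and s: "s > 0" and s\<rho>: "s \<le> 2 * \<rho>" and \<rho>r: "\<rho> \<le> 2 * r + s"
    and t: "t > 0" and tl: "\<bar>ln (t / d)\<bar> \<le> \<bar>ln (\<rho> / d)\<bar>"
  shows "d * (1 + \<bar>ln (t / d)\<bar>) \<le> 3 * (r * (1 + \<bar>ln (s / r)\<bar>))"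
proof -
  have r: "r > 0" using d dr by linarith
  have \<rho>: "\<rho> > 0" using s s\<rho> by linarith
  have ln3: "ln (3::real) \<le> 2" using ln_le_minus_one[of 3] by simp
  have ln2: "ln (2::real) \<le> 1" using ln_le_minus_one[of 2] by simp
  have lsr: "ln (s / r) = ln s - ln r" using s r by (simp add: ln_div)
  have ltd: "ln (t / d) = ln t - ln d" using t d by (simp add: ln_div)
  have l\<rho>d: "ln (\<rho> / d) = ln \<rho> - ln d" using \<rho> d by (simp add: ln_div)
  have ldr: "ln d \<le> ln r" using d dr by simp
  have Q0: "0 \<le> r * \<bar>ln (s / r)\<bar>" using r by simp
  show ?thesis
  proof (cases "\<rho> \<ge> d")
    case True
    define A where "A = 2 * r + s"
    have A: "A > 0" "r \<le> A" using r s by (auto simp: A_def)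
    define M where "M = ln A - ln r"
    have M0: "0 \<le> M" using A r by (simp add: M_def)
    have "ln \<rho> \<le> ln A" using \<rho> \<rho>r by (simp add: A_def)
    then have "\<bar>ln (\<rho> / d)\<bar> \<le> M + (ln r - ln d)" using True d l\<rho>d by (simp add: M_def)
    then have h1: "\<bar>ln (t / d)\<bar> \<le> M + (ln r - ln d)" using tl by linarith
    have "ln (r / d) \<le> r / d - 1" using r d by (intro ln_le_minus_one) simp
    then have "d * ln (r / d) \<le> d * (r / d - 1)" using d by (intro mult_left_mono) auto
    then have h2: "d * (ln r - ln d) \<le> r - d" using d r by (simp add: ln_div algebra_simps)
    have h3: "0 \<le> (r - d) * M" using dr M0 by simp
    have "d * (1 + \<bar>ln (t / d)\<bar>) \<le> d * (1 + M + (ln r - ln d))"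
      using h1 d by (intro mult_left_mono) auto
    also have "\<dots> = d * (1 + M) + d * (ln r - ln d)" by (simp add: algebra_simps)
    also have "\<dots> \<le> d * (1 + M) + (r - d) * (1 + M)" using h2 h3 by (simp add: algebra_simps)
    also have "\<dots> = r * (1 + M)" by (simp add: algebra_simps)
    finally have h4: "d * (1 + \<bar>ln (t / d)\<bar>) \<le> r * (1 + M)" .
    have "M \<le> 2 + \<bar>ln (s / r)\<bar>"
    proof (cases "s \<le> r")
      case True
      then have "A \<le> 3 * r" by (simp add: A_def)
      then have "ln A \<le> ln (3 * r)" using A r by simp
      then have "M \<le> ln 3" using r by (simp add: M_def ln_mult)
      then show ?thesis using ln3 by simp
    next
      case False
      then have "A \<le> 3 * s" by (simp add: A_def)
      then have "ln A \<le> ln (3 * s)" using A s by simp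
      then have "M \<le> ln 3 + (ln s - ln r)" using s by (simp add: M_def ln_mult)
      then show ?thesis using ln3 lsr by simp
    qed
    then have "r * (1 + M) \<le> r * (3 + \<bar>ln (s / r)\<bar>)" using r by (intro mult_left_mono) auto
    also have "\<dots> \<le> 3 * (r * (1 + \<bar>ln (s / r)\<bar>))" using Q0 by (simp add: algebra_simps)
    finally show ?thesis using h4 by linarith
  next
    case False
    have "\<bar>ln (\<rho> / d)\<bar> = ln d - ln \<rho>" using False \<rho> d l\<rho>d by simp
    moreover have "ln (s / 2) \<le> ln \<rho>" using s s\<rho> by simp
    moreover have "ln (s / 2) = ln s - ln 2" using s by (simp add: ln_div)
    ultimately have h1: "\<bar>ln (t / d)\<bar> \<le> ln 2 + (ln d - ln s)" using tl by linarith
    show ?thesis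
    proof (cases "s \<le> d")
      case True
      then have "ln s \<le> ln d" using s by simp
      then have "ln d - ln s \<le> \<bar>ln (s / r)\<bar>" using lsr ldr by linarith
      then have "\<bar>ln (t / d)\<bar> \<le> 1 + \<bar>ln (s / r)\<bar>" using h1 ln2 by linarith
      then have "d * (1 + \<bar>ln (t / d)\<bar>) \<le> d * (2 + \<bar>ln (s / r)\<bar>)" using d by (intro mult_left_mono) auto
      also have "\<dots> \<le> r * (2 + \<bar>ln (s / r)\<bar>)" using dr by (intro mult_right_mono) auto
      also have "\<dots> \<le> 3 * (r * (1 + \<bar>ln (s / r)\<bar>))" using Q0 r by (simp add: algebra_simps)
      finally show ?thesis .
    next
      case False
      then have "ln d \<le> ln s" using d by simp
      then have "\<bar>ln (t / d)\<bar> \<le> 1" using h1 ln2 by linarith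
      then have "d * (1 + \<bar>ln (t / d)\<bar>) \<le> d * 2" using d by (intro mult_left_mono) auto
      also have "\<dots> \<le> 3 * r" using dr d by linarith
      also have "\<dots> \<le> 3 * (r * (1 + \<bar>ln (s / r)\<bar>))" using Q0 by (simp add: algebra_simps)
      finally show ?thesis .
    qed
  qed
qed

lemma unit_dir:
  assumes "distn n x y = r" "r > 0"
  shows "(\<Sum>i<n. ((y i - x i) / r)^2) = 1"
proof -
  have S0: "(\<Sum>i<n. (x i - y i)^2) \<ge> 0" by (simp add: sum_nonneg)
  have "(\<Sum>i<n. (x i - y i)^2) = (sqrt (\<Sum>i<n. (x i - y i)^2))^2" using S0 by simp
  also have "\<dots> = r^2" using assms(1) by (simp add: distn_def)
  finally have h: "(\<Sum>i<n. (x i - y i)^2) = r^2" .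
  have "(\<Sum>i<n. ((y i - x i) / r)^2) = (\<Sum>i<n. (x i - y i)^2 / r^2)"
    by (intro sum.cong) (auto simp: power_divide power2_commute)
  also have "\<dots> = (\<Sum>i<n. (x i - y i)^2) / r^2" by (rule sum_divide_distrib[symmetric])
  also have "\<dots> = 1" using h assms(2) by simp
  finally show ?thesis .
qed

lemma ln_between:
  assumes d: "d > 0" and \<rho>: "\<rho> > (0::real)" and \<tau>: "min d \<rho> \<le> \<tau>" "\<tau> \<le> max d \<rho>"
  shows "\<bar>ln (\<tau> / d)\<bar> \<le> \<bar>ln (\<rho> / d)\<bar>"
proof -
  have \<tau>0: "\<tau> > 0" using \<tau> d \<rho> by linarith
  have e: "ln (\<tau> / d) = ln \<tau> - ln d" "ln (\<rho> / d) = ln \<rho> - ln d" using d \<rho> \<tau>0 by (simp_all add: ln_div)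
  show ?thesis
  proof (cases "d \<le> \<rho>")
    case True
    then have "d \<le> \<tau>" "\<tau> \<le> \<rho>" using \<tau> by auto
    then have "ln d \<le> ln \<tau>" "ln \<tau> \<le> ln \<rho>" using d \<tau>0 by simp_all
    then show ?thesis unfolding e by linarith
  next
    case False
    then have "\<rho> \<le> \<tau>" "\<tau> \<le> d" using \<tau> by auto
    then have "ln \<rho> \<le> ln \<tau>" "ln \<tau> \<le> ln d" using \<rho> \<tau>0 by simp_all
    then show ?thesis unfolding e by linarith
  qed
qed

lemma lemG:
  assumes op: "openin (topn n) D" and n: "2 \<le> n" and a0: "a0 \<in> bdry n D" and z: "z \<in> D"
    and d: "distn n z a0 = d" "d > 0" and cR: "c \<in> Rn n" and cD: "c \<notin> D" and ca: "c \<noteq> a0"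
  shows "\<exists>b\<in>bdry n D. b \<noteq> a0 \<and> \<bar>ln (distn n a0 b / d)\<bar> \<le> \<bar>ln (distn n a0 c / d)\<bar>"
proof -
  have a0R: "a0 \<in> Rn n" and a0D: "a0 \<notin> D" using a0 bdry_open[OF op] bdry_sub by blast+
  have zR: "z \<in> Rn n" using op z openin_topn by blast
  define \<rho> where "\<rho> = distn n a0 c"
  have \<rho>: "\<rho> > 0" using distn_zero[OF a0R cR] distn_nonneg[of n a0 c] ca by (auto simp: \<rho>_def)
  define u where "u = (\<lambda>i. (c i - a0 i) / \<rho>)"
  define e where "e = (\<lambda>i. (z i - a0 i) / d)"
  have u1: "(\<Sum>i<n. (u i)^2) = 1" unfolding u_def by (rule unit_dir) (use \<rho> in \<open>auto simp: \<rho>_def\<close>)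
  have e1: "(\<Sum>i<n. (e i)^2) = 1" unfolding e_def by (rule unit_dir) (use d in \<open>auto simp: distn_commute\<close>)
  have uR: "u \<in> Rn n" using a0R cR by (simp add: u_def Rn_def)
  have eR: "e \<in> Rn n" using a0R zR by (simp add: e_def Rn_def)
  have ze: "(\<lambda>i. a0 i + d * e i) = z" using d by (simp add: e_def)
  then have start: "(\<lambda>i. a0 i + d * e i) \<in> D" using z by simp
  have S1: "(\<exists>b\<in>bdry n D. distn n a0 b = d) \<or> (\<lambda>i. a0 i + d * u i) \<in> D"
  proof (cases "\<forall>i<n. u i = - e i")
    case False
    show ?thesis by (rule arc[OF op a0R uR eR u1 e1 False d(2) start])
  next
    case True
    obtain w where wR: "w \<in> Rn n" and w1: "(\<Sum>i<n. (w i)^2) = 1" and we: "(\<Sum>i<n. e i * w i) = 0"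
      using perp[OF n e1] by blast
    have nw: "\<not> (\<forall>i<n. w i = - e i)"
    proof
      assume "\<forall>i<n. w i = - e i"
      then have "(\<Sum>i<n. e i * w i) = (\<Sum>i<n. - ((e i)^2))" by (intro sum.cong) (auto simp: power2_eq_square)
      then show False using we e1 by (simp add: sum_negf)
    qed
    have nu: "\<not> (\<forall>i<n. u i = - w i)"
    proof
      assume "\<forall>i<n. u i = - w i"
      then have "\<forall>i<n. w i = e i" using True by force
      then have "(\<Sum>i<n. e i * w i) = (\<Sum>i<n. (e i)^2)" by (intro sum.cong) (auto simp: power2_eq_square)
      then show False using we e1 by simp
    qed
    from arc[OF op a0R wR eR w1 e1 nw d(2) start]
    show ?thesis
    proof
      assume "(\<lambda>i. a0 i + d * w i) \<in> D"
      then show ?thesis by (rule arc[OF op a0R uR wR u1 w1 nu d(2)])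
    qed blast
  qed
  from S1 show ?thesis
  proof
    assume "\<exists>b\<in>bdry n D. distn n a0 b = d"
    then obtain b where b: "b \<in> bdry n D" "distn n a0 b = d" by blast
    have "b \<noteq> a0" using b d by (auto simp: distn_def)
    then show ?thesis using b d by auto
  next
    assume st: "(\<lambda>i. a0 i + d * u i) \<in> D"
    define \<gamma> where "\<gamma> = (\<lambda>s::real. \<lambda>i. a0 i + (d + s * (\<rho> - d)) * u i)"
    have "\<exists>s\<in>{0..1}. \<gamma> s \<in> bdry n D"
    proof (rule exit_point[OF op])
      show "\<forall>t\<in>{0..1}. \<gamma> t \<in> Rn n" using a0R uR by (simp add: Rn_def \<gamma>_def)
      show "\<forall>i<n. continuous_on {0..1} (\<lambda>t. \<gamma> t i)" unfolding \<gamma>_def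
        by (intro allI impI continuous_intros)
      show "\<gamma> 0 \<in> D" using st by (simp add: \<gamma>_def)
      have "\<gamma> 1 = c" using \<rho> by (simp add: \<gamma>_def u_def)
      then show "\<gamma> 1 \<notin> D" using cD by simp
    qed
    then obtain s where s: "s \<in> {0..1}" "\<gamma> s \<in> bdry n D" by blast
    define \<tau> where "\<tau> = d + s * (\<rho> - d)"
    have \<tau>eq: "\<tau> = (1 - s) * d + s * \<rho>" by (simp add: \<tau>_def algebra_simps)
    have \<tau>bd: "min d \<rho> \<le> \<tau>" "\<tau> \<le> max d \<rho>"
    proof -
      have "(1 - s) * min d \<rho> + s * min d \<rho> \<le> (1 - s) * d + s * \<rho>"
        using s by (intro add_mono mult_left_mono) auto
      then show "min d \<rho> \<le> \<tau>" using \<tau>eq by (simp add: algebra_simps)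
      have "(1 - s) * d + s * \<rho> \<le> (1 - s) * max d \<rho> + s * max d \<rho>"
        using s by (intro add_mono mult_left_mono) auto
      then show "\<tau> \<le> max d \<rho>" using \<tau>eq by (simp add: algebra_simps)
    qed
    have \<tau>0: "\<tau> > 0" using \<tau>bd d \<rho> by linarith
    have "distn n a0 (\<gamma> s) = \<bar>\<tau>\<bar> * sqrt (\<Sum>i<n. (u i)^2)"
      unfolding \<gamma>_def \<tau>_def by (rule distn_line0)
    then have dg: "distn n a0 (\<gamma> s) = \<tau>" using u1 \<tau>0 by simp
    then have "\<gamma> s \<noteq> a0" using \<tau>0 by (auto simp: distn_def)
    moreover have "\<bar>ln (distn n a0 (\<gamma> s) / d)\<bar> \<le> \<bar>ln (distn n a0 c / d)\<bar>"
      unfolding dg \<rho>_def[symmetric] by (rule ln_between[OF d(2) \<rho> \<tau>bd])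
    ultimately show ?thesis using s by blast
  qed
qed


lemma Qn_ge:
  "Qn n z a b \<ge> ereal (distn n z a)"
proof (cases "a = b")
  case False
  have "0 \<le> distn n z a * \<bar>ln (distn n a b / distn n z a)\<bar>"
    using distn_nonneg[of n z a] by simp
  then have "distn n z a \<le> distn n z a * (1 + \<bar>ln (distn n a b / distn n z a)\<bar>)"
    by (simp add: distrib_left)
  then show ?thesis using False by (simp add: Qn_def)
qed (simp add: Qn_def)

theorem lemma2:
  "\<exists>C0 :: real. C0 > 0 \<and>
     (\<forall>n D z. n \<ge> 2 \<longrightarrow> domain_n n D \<longrightarrow> D \<subseteq> Rn n \<longrightarrow>
        (\<exists>p q. p \<in> Rn n - D \<and> q \<in> Rn n - D \<and> p \<noteq> q) \<longrightarrow> z \<in> D \<longrightarrow>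
        lam'' n D z \<le> lam' n D z \<and> lam' n D z \<le> lam n D z \<and>
        lam n D z \<le> ereal C0 * lam'' n D z \<and>
        lam n D z \<le> ereal (1 / dbd n D z))"
proof (intro exI[of _ 3] conjI allI impI)
  fix n D z
  assume n: "2 \<le> n" and dom: "domain_n n D" and DR: "D \<subseteq> Rn n"
    and pq: "\<exists>p q. p \<in> Rn n - D \<and> q \<in> Rn n - D \<and> p \<noteq> q" and z: "z \<in> D"
  have op: "openin (topn n) D" using dom by (simp add: domain_n_def)
  obtain p q where p: "p \<in> Rn n - D" and q: "q \<in> Rn n - D" and pq': "p \<noteq> q" using pq by blast
  define d where "d = dbd n D z"
  have nr: "d > 0 \<and> (\<forall>c\<in>Rn n - D. d \<le> distn n z c) \<and> (\<exists>a0\<in>bdry n D. distn n z a0 = d)"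
    unfolding d_def using nearest[OF op z] p by blast
  then have d0: "d > 0" and low: "\<And>c. c \<in> Rn n - D \<Longrightarrow> d \<le> distn n z c" by auto
  obtain a0 where a0: "a0 \<in> bdry n D" "distn n z a0 = d" using nr by blast
  have bdsub: "bdry n D \<subseteq> Rn n - D" using bdry_open[OF op] bdry_sub by blast
  define S where "S = {Qn n z a b | a b. a \<in> Rn n - D \<and> b \<in> Rn n - D}"
  define S' where "S' = {Qn n z a b | a b. a \<in> bdry n D \<and> b \<in> bdry n D}"
  define S'' where "S'' = {Qn n z a b | a b. a \<in> bdry n D \<and> b \<in> bdry n D \<and> distn n z a = dbd n D z}"
  have lamS: "lam n D z = inverse (Inf S)" by (simp add: lam_def S_def)
  have lamS': "lam' n D z = inverse (Inf S')" by (simp add: lam'_def S'_def)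
  have lamS'': "lam'' n D z = inverse (Inf S'')" by (simp add: lam''_def S''_def)
  have sub1: "S'' \<subseteq> S'" unfolding S''_def S'_def by blast
  have sub2: "S' \<subseteq> S" unfolding S'_def S_def using bdsub by blast
  have lowS: "ereal d \<le> Inf S"
  proof (rule Inf_greatest)
    fix x assume "x \<in> S"
    then obtain a b where "a \<in> Rn n - D" "x = Qn n z a b" by (auto simp: S_def)
    then show "ereal d \<le> x" using low[of a] Qn_ge[of n z a b] by (meson ereal_less_eq(3) order_trans)
  qed
  have I1: "Inf S \<le> Inf S'" "Inf S' \<le> Inf S''"
    using sub1 sub2 by (auto intro: Inf_superset_mono)
  have pos: "0 \<le> Inf S" using lowS d0 by (meson ereal_less_eq(5) less_imp_le order_trans)
  have pos': "0 \<le> Inf S'" using pos I1 by (meson order_trans)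
  show "lam'' n D z \<le> lam' n D z" unfolding lamS' lamS''
    by (rule ereal_inverse_antimono[OF pos' I1(2)])
  show "lam' n D z \<le> lam n D z" unfolding lamS' lamS
    by (rule ereal_inverse_antimono[OF pos I1(1)])
  have key: "\<And>a b. a \<in> Rn n - D \<Longrightarrow> b \<in> Rn n - D \<Longrightarrow> a \<noteq> b \<Longrightarrow>
      \<exists>y. y \<in> S'' \<and> y \<le> ereal (3 * (distn n z a * (1 + \<bar>ln (distn n a b / distn n z a)\<bar>)))"
  proof -
    fix a b assume a: "a \<in> Rn n - D" and b: "b \<in> Rn n - D" and ab: "a \<noteq> b"
    define r where "r = distn n z a"
    define s where "s = distn n a b"
    have a0R: "a0 \<in> Rn n" using a0(1) bdry_sub by blast
    have dr: "d \<le> r" using low[OF a] by (simp add: r_def)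
    have s0: "s > 0" using distn_zero[of a n b] distn_nonneg[of n a b] a b ab by (auto simp: s_def)
    define \<rho>a where "\<rho>a = distn n a0 a"
    define \<rho>b where "\<rho>b = distn n a0 b"
    have t1: "s \<le> \<rho>a + \<rho>b" unfolding s_def \<rho>a_def \<rho>b_def
      using distn_triangle[of n a b a0] distn_commute[of n a a0] by linarith
    have t2: "\<rho>a \<le> d + r" unfolding \<rho>a_def r_def
      using distn_triangle[of n a0 a z] distn_commute[of n a0 z] a0(2) by linarith
    have t3: "\<rho>b \<le> \<rho>a + s" unfolding \<rho>a_def \<rho>b_def s_def
      using distn_triangle[of n a0 b a] by linarith
    define c where "c = (if \<rho>b \<le> \<rho>a then a else b)"
    define \<rho> where "\<rho> = distn n a0 c"
    have cR: "c \<in> Rn n - D" using a b by (simp add: c_def)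
    have \<rho>bd: "s \<le> 2 * \<rho>" "\<rho> \<le> 2 * r + s"
      using t1 t2 t3 dr s0 by (auto simp: \<rho>_def c_def \<rho>a_def[symmetric] \<rho>b_def[symmetric])
    have ca: "c \<noteq> a0"
    proof
      assume "c = a0"
      then have "\<rho> = 0" by (simp add: \<rho>_def distn_def)
      then show False using \<rho>bd s0 by linarith
    qed
    obtain b' where b': "b' \<in> bdry n D" "b' \<noteq> a0" "\<bar>ln (distn n a0 b' / d)\<bar> \<le> \<bar>ln (\<rho> / d)\<bar>"
      using lemG[OF op n a0(1) z a0(2) d0, of c] cR ca by (auto simp: \<rho>_def)
    have b'R: "b' \<in> Rn n" using b'(1) bdry_sub by blast
    have t0: "distn n a0 b' > 0" using distn_zero[OF a0R b'R] distn_nonneg[of n a0 b'] b'(2) by auto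
    have y: "Qn n z a0 b' = ereal (d * (1 + \<bar>ln (distn n a0 b' / d)\<bar>))"
      using b'(2) a0(2) by (simp add: Qn_def)
    have yS: "Qn n z a0 b' \<in> S''" unfolding S''_def using a0 b'(1) d_def by blast
    have "d * (1 + \<bar>ln (distn n a0 b' / d)\<bar>) \<le> 3 * (r * (1 + \<bar>ln (s / r)\<bar>))"
      by (rule key_ineq[OF d0 dr s0 \<rho>bd t0 b'(3)])
    then show "\<exists>y. y \<in> S'' \<and> y \<le> ereal (3 * (distn n z a * (1 + \<bar>ln (distn n a b / distn n z a)\<bar>)))"
      using y yS by (auto simp: r_def s_def)
  qed
  obtain y0 where y0: "y0 \<in> S''" "y0 \<le> ereal (3 * (distn n z p * (1 + \<bar>ln (distn n p q / distn n z p)\<bar>)))"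
    using key[OF p q pq'] by blast
  have lowS'': "ereal d \<le> Inf S''" using lowS I1 by (meson order_trans)
  have "Inf S'' \<le> y0" using y0(1) by (rule Inf_lower)
  then have fin1: "Inf S'' \<le> ereal (3 * (distn n z p * (1 + \<bar>ln (distn n p q / distn n z p)\<bar>)))"
    using y0(2) by (rule order_trans)
  have "Inf S'' < \<infinity>" using le_less_trans[OF fin1, of \<infinity>] by simp
  then obtain m'' where m'': "Inf S'' = ereal m''" using lowS'' by (cases "Inf S''") auto
  have "Qn n z p q \<in> S" using p q by (auto simp: S_def)
  then have "Inf S \<le> Qn n z p q" by (rule Inf_lower)
  moreover have "Qn n z p q = ereal (distn n z p * (1 + \<bar>ln (distn n p q / distn n z p)\<bar>))"
    using pq' by (simp add: Qn_def)
  ultimately have fin2: "Inf S \<le> ereal (distn n z p * (1 + \<bar>ln (distn n p q / distn n z p)\<bar>))" by simp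
  have "Inf S < \<infinity>" using le_less_trans[OF fin2, of \<infinity>] by simp
  then obtain m where m: "Inf S = ereal m" using lowS by (cases "Inf S") auto
  have dm: "d \<le> m" using lowS m by simp
  have dm'': "d \<le> m''" using lowS'' m'' by simp
  have "ereal (m'' / 3) \<le> Inf S"
  proof (rule Inf_greatest)
    fix x assume "x \<in> S"
    then obtain a b where ab: "a \<in> Rn n - D" "b \<in> Rn n - D" "x = Qn n z a b" by (auto simp: S_def)
    show "ereal (m'' / 3) \<le> x"
    proof (cases "a = b")
      case True then show ?thesis using ab by (simp add: Qn_def)
    next
      case False
      obtain y where "y \<in> S''" "y \<le> ereal (3 * (distn n z a * (1 + \<bar>ln (distn n a b / distn n z a)\<bar>)))"
        using key[OF ab(1,2) False] by blast
      then have "ereal m'' \<le> ereal (3 * (distn n z a * (1 + \<bar>ln (distn n a b / distn n z a)\<bar>)))"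
        using m'' Inf_lower order_trans by metis
      then show ?thesis using ab(3) False by (simp add: Qn_def)
    qed
  qed
  then have mm: "m'' \<le> 3 * m" using m by simp
  have "lam n D z = ereal (1 / m)" using lamS m dm d0 by (simp add: inverse_eq_divide)
  moreover have "lam'' n D z = ereal (1 / m'')" using lamS'' m'' dm'' d0 by (simp add: inverse_eq_divide)
  moreover have "1 / m \<le> 3 * (1 / m'')" using mm dm dm'' d0 by (simp add: field_simps)
  ultimately show "lam n D z \<le> ereal 3 * lam'' n D z" by simp
  have "1 / m \<le> 1 / d" using dm d0 by (simp add: frac_le)
  then show "lam n D z \<le> ereal (1 / dbd n D z)" using \<open>lam n D z = ereal (1 / m)\<close> by (simp add: d_def)
qed (simp)

end
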